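(* Let $A,B,C,D$ be pairwise intersecting compact convex sets in the plane. If $o(ABC)=o(ABD)=0$ but $o(ACD)\ne0$ and $o(BCD)\ne0$, then $o(ACD)=o(BCD)$.
   Context: For three pairwise intersecting compact convex sets $X,Y,Z$ in the plane: $o(XYZ)=0$ if $X\cap Y\cap Z\neq\emptyset$; otherwise $o(XYZ)=o(xyz)$ for any $x\in Y\cap Z$, $y\in X\cap Z$, $z\in X\cap Y$, where for points $o(xyz)=+1$ for a counterclockwise and $-1$ for a clockwise triangle (independent of the choice). *)

theory Defs
  imports "HOL-Analysis.Analysis"
begin

text \<open>Points of the plane are pairs of reals. Orientation of a point triple:
  +1 counterclockwise, -1 clockwise (0 for collinear triples, which never arise
  in the set-level definition below).\<close>

definition orient_pts :: "real \<times> real \<Rightarrow> real \<times> real \<Rightarrow> real \<times> real \<Rightarrow> int" where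
  "orient_pts x y z =
     (let d = (fst y - fst x) * (snd z - snd x) - (snd y - snd x) * (fst z - fst x)
      in if d > 0 then 1 else if d < 0 then -1 else 0)"

text \<open>Orientation of three pairwise intersecting compact convex sets:
  0 if they have a common point, otherwise the orientation of any
  x in Y \<inter> Z, y in X \<inter> Z, z in X \<inter> Y (independent of the choice).\<close>

definition orient_sets :: "(real \<times> real) set \<Rightarrow> (real \<times> real) set \<Rightarrow> (real \<times> real) set \<Rightarrow> int" where
  "orient_sets X Y Z =
     (if X \<inter> Y \<inter> Z \<noteq> {} then 0
      else orient_pts (SOME x. x \<in> Y \<inter> Z) (SOME y. y \<in> X \<inter> Z) (SOME z. z \<in> X \<inter> Y))"

end

theory Submission
  imports Defs
begin

definition det3 :: "real \<times> real \<Rightarrow> real \<times> real \<Rightarrow> real \<times> real \<Rightarrow> real" where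
  "det3 x y z = (fst y - fst x) * (snd z - snd x) - (snd y - snd x) * (fst z - fst x)"

lemma det3_cyc: "det3 x y z = det3 y z x"
  unfolding det3_def by (simp add: algebra_simps)

lemma cvx_pt:
  assumes "convex S" "a \<in> S" "b \<in> S" "0 \<le> s" "s \<le> 1"
  shows "(1 - s) *\<^sub>R a + s *\<^sub>R b \<in> S"
  by (rule convexD) (use assms in auto)

lemma det3_nz:
  assumes cX: "convex X" and cY: "convex Y" and cZ: "convex Z"
    and e: "X \<inter> Y \<inter> Z = {}"
    and x: "x \<in> Y" "x \<in> Z" and y: "y \<in> X" "y \<in> Z" and z: "z \<in> X" "z \<in> Y"
  shows "det3 x y z \<noteq> 0"
proof
  assume d: "det3 x y z = 0"
  have xz: "x \<noteq> z" using e x z by blast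
  obtain s where s: "y = x + s *\<^sub>R (z - x)"
  proof (cases "fst z - fst x = 0")
    case True
    then have "snd z - snd x \<noteq> 0" using xz by (simp add: prod_eq_iff)
    moreover have "(fst y - fst x) * (snd z - snd x) = 0" using d True unfolding det3_def by simp
    ultimately have "fst y = fst x" by simp
    show ?thesis
      apply (rule that[of "(snd y - snd x) / (snd z - snd x)"])
      using True \<open>snd z - snd x \<noteq> 0\<close> \<open>fst y = fst x\<close>
      by (simp add: prod_eq_iff)
  next
    case False
    have "(snd y - snd x) = (fst y - fst x) * (snd z - snd x) / (fst z - fst x)"
      using d False unfolding det3_def by (simp add: field_simps)
    show ?thesis
      apply (rule that[of "(fst y - fst x) / (fst z - fst x)"])
      using False \<open>(snd y - snd x) = _\<close>
      by (simp add: prod_eq_iff)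
  qed
  show False
  proof (cases "s < 0")
    case True
    define t where "t = - s / (1 - s)"
    have "(1 - t) * s + t = 0" using True unfolding t_def by (simp add: field_simps)
    have "(1 - t) *\<^sub>R y + t *\<^sub>R z = x + ((1 - t) * s + t) *\<^sub>R (z - x)"
      unfolding s by (simp add: algebra_simps)
    then have "x = (1 - t) *\<^sub>R y + t *\<^sub>R z" using \<open>(1 - t) * s + t = 0\<close> by simp
    moreover have "(1 - t) *\<^sub>R y + t *\<^sub>R z \<in> X"
      using True by (intro cvx_pt cX y z) (auto simp: t_def field_simps)
    ultimately show False using e x by blast
  next
    case False
    show False
    proof (cases "s \<le> 1")
      case True
      have "y = (1 - s) *\<^sub>R x + s *\<^sub>R z" unfolding s by (simp add: algebra_simps)
      moreover have "(1 - s) *\<^sub>R x + s *\<^sub>R z \<in> Y"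
        using True False by (intro cvx_pt cY x z) auto
      ultimately show False using e y by blast
    next
      case True2: False
      define t where "t = 1 / s"
      have "t * s = 1" using True2 unfolding t_def by simp
      have "(1 - t) *\<^sub>R x + t *\<^sub>R y = x + (t * s) *\<^sub>R (z - x)"
        unfolding s by (simp add: algebra_simps)
      then have "z = (1 - t) *\<^sub>R x + t *\<^sub>R y" using \<open>t * s = 1\<close> by simp
      moreover have "(1 - t) *\<^sub>R x + t *\<^sub>R y \<in> Z"
        using True2 by (intro cvx_pt cZ x y) (auto simp: t_def field_simps)
      ultimately show False using e z by blast
    qed
  qed
qed

lemma det3_mid:
  assumes cX: "convex X" and cY: "convex Y" and cZ: "convex Z"
    and e: "X \<inter> Y \<inter> Z = {}"
    and x: "x \<in> Y" "x \<in> Z" and y: "y \<in> X" "y \<in> Z" and z: "z \<in> X" "z \<in> Y"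
    and y': "y' \<in> X" "y' \<in> Z"
  shows "det3 x y z > 0 \<longleftrightarrow> det3 x y' z > 0"
proof -
  have key: "False" if "d1 > 0" "d2 < 0" "d1 = det3 x a z" "d2 = det3 x b z"
    "a \<in> X" "a \<in> Z" "b \<in> X" "b \<in> Z" for d1 d2 a b
  proof -
    define t where "t = d1 / (d1 - d2)"
    have t0: "0 \<le> t" "t \<le> 1" using that(1,2) by (auto simp: t_def field_simps)
    define w where "w = (1 - t) *\<^sub>R a + t *\<^sub>R b"
    have w: "w \<in> X" "w \<in> Z" unfolding w_def using t0 that cX cZ by (auto intro!: cvx_pt)
    have "det3 x w z = (1 - t) * d1 + t * d2"
      unfolding w_def that(3,4) det3_def by (simp add: algebra_simps)
    also have "\<dots> = 0" using that(1,2) unfolding t_def by (simp add: field_simps)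
    finally show False using det3_nz[OF cX cY cZ e x w z] by simp
  qed
  have n1: "det3 x y z \<noteq> 0" using det3_nz[OF cX cY cZ e x y z] .
  have n2: "det3 x y' z \<noteq> 0" using det3_nz[OF cX cY cZ e x y' z] .
  show ?thesis
    using key[of "det3 x y z" "det3 x y' z" y y'] key[of "det3 x y' z" "det3 x y z" y' y] n1 n2 y y'
    by (smt (verit))
qed

lemma det3_inv:
  assumes cX: "convex X" and cY: "convex Y" and cZ: "convex Z"
    and e: "X \<inter> Y \<inter> Z = {}"
    and x: "x \<in> Y" "x \<in> Z" and y: "y \<in> X" "y \<in> Z" and z: "z \<in> X" "z \<in> Y"
    and x': "x' \<in> Y" "x' \<in> Z" and y': "y' \<in> X" "y' \<in> Z" and z': "z' \<in> X" "z' \<in> Y"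
  shows "det3 x y z > 0 \<longleftrightarrow> det3 x' y' z' > 0"
proof -
  have e1: "Z \<inter> X \<inter> Y = {}" "Y \<inter> Z \<inter> X = {}" using e by blast+
  have 1: "det3 x y z > 0 \<longleftrightarrow> det3 x y' z > 0"
    by (rule det3_mid[OF cX cY cZ e x y z y'])
  have 2: "det3 z x y' > 0 \<longleftrightarrow> det3 z x' y' > 0"
    using det3_mid[of Z X Y z x y' x'] assms e1 by blast
  have 3: "det3 y' z x' > 0 \<longleftrightarrow> det3 y' z' x' > 0"
    using det3_mid[of Y Z X y' z x' z'] assms e1 by blast
  have c1: "det3 x y' z = det3 z x y'" "det3 z x' y' = det3 y' z x'" "det3 y' z' x' = det3 x' y' z'"
    using det3_cyc by metis+
  show ?thesis using 1 2 3 c1 by simp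
qed

lemma orient_inv:
  assumes cX: "convex X" and cY: "convex Y" and cZ: "convex Z"
    and e: "X \<inter> Y \<inter> Z = {}"
    and x: "x \<in> Y" "x \<in> Z" and y: "y \<in> X" "y \<in> Z" and z: "z \<in> X" "z \<in> Y"
    and x': "x' \<in> Y" "x' \<in> Z" and y': "y' \<in> X" "y' \<in> Z" and z': "z' \<in> X" "z' \<in> Y"
  shows "orient_pts x y z = orient_pts x' y' z'"
proof -
  have n1: "det3 x y z \<noteq> 0" using det3_nz[OF cX cY cZ e x y z] .
  have n2: "det3 x' y' z' \<noteq> 0" using det3_nz[OF cX cY cZ e x' y' z'] .
  have i: "det3 x y z > 0 \<longleftrightarrow> det3 x' y' z' > 0" by (rule det3_inv[OF assms])
  show ?thesis using n1 n2 i unfolding orient_pts_def Let_def det3_def[symmetric]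
    by (smt (verit))
qed

theorem lemma3:
  fixes A B C D :: "(real \<times> real) set"
  assumes "compact A" "compact B" "compact C" "compact D"
    and "convex A" "convex B" "convex C" "convex D"
    and "A \<inter> B \<noteq> {}" "A \<inter> C \<noteq> {}" "A \<inter> D \<noteq> {}"
    and "B \<inter> C \<noteq> {}" "B \<inter> D \<noteq> {}" "C \<inter> D \<noteq> {}"
    and "orient_sets A B C = 0" "orient_sets A B D = 0"
    and "orient_sets A C D \<noteq> 0" "orient_sets B C D \<noteq> 0"
  shows "orient_sets A C D = orient_sets B C D"
proof -
  have e1: "A \<inter> C \<inter> D = {}" using assms(17) unfolding orient_sets_def by metis
  have e2: "B \<inter> C \<inter> D = {}" using assms(18) unfolding orient_sets_def by metis
  have nzs: "orient_sets X Y Z \<noteq> 0"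
    if h: "X \<inter> Y \<inter> Z = {}" and c: "convex X" "convex Y" "convex Z"
      and ne: "Y \<inter> Z \<noteq> {}" "X \<inter> Z \<noteq> {}" "X \<inter> Y \<noteq> {}" for X Y Z
  proof -
    define a where "a = (SOME x. x \<in> Y \<inter> Z)"
    define b where "b = (SOME x. x \<in> X \<inter> Z)"
    define c' where "c' = (SOME x. x \<in> X \<inter> Y)"
    have a: "a \<in> Y" "a \<in> Z" using someI_ex[of "\<lambda>x. x \<in> Y \<inter> Z"] ne unfolding a_def by auto
    have b: "b \<in> X" "b \<in> Z" using someI_ex[of "\<lambda>x. x \<in> X \<inter> Z"] ne unfolding b_def by auto
    have cc: "c' \<in> X" "c' \<in> Y" using someI_ex[of "\<lambda>x. x \<in> X \<inter> Y"] ne unfolding c'_def by auto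
    have "det3 a b c' \<noteq> 0" using det3_nz[OF c h a b cc] .
    then have "orient_pts a b c' \<noteq> 0"
      unfolding orient_pts_def Let_def det3_def by auto
    then show ?thesis unfolding orient_sets_def a_def b_def c'_def using h by simp
  qed
  have p1: "A \<inter> B \<inter> C \<noteq> {}"
    using nzs[of A B C] assms(5,6,7,9,10,12,15) by blast
  have p2: "A \<inter> B \<inter> D \<noteq> {}"
    using nzs[of A B D] assms(5,6,8,9,11,13,16) by blast
  obtain p where p: "p \<in> A" "p \<in> B" "p \<in> C" using p1 by blast
  obtain q where q: "q \<in> A" "q \<in> B" "q \<in> D" using p2 by blast
  define x0 where "x0 = (SOME x. x \<in> C \<inter> D)"
  have x0: "x0 \<in> C" "x0 \<in> D" using someI_ex[of "\<lambda>x. x \<in> C \<inter> D"] assms(14) unfolding x0_def by auto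
  have ya: "(SOME y. y \<in> A \<inter> D) \<in> A \<inter> D" using someI_ex[of "\<lambda>x. x \<in> A \<inter> D"] assms(11) by auto
  have za: "(SOME y. y \<in> A \<inter> C) \<in> A \<inter> C" using someI_ex[of "\<lambda>x. x \<in> A \<inter> C"] assms(10) by auto
  have yb: "(SOME y. y \<in> B \<inter> D) \<in> B \<inter> D" using someI_ex[of "\<lambda>x. x \<in> B \<inter> D"] assms(13) by auto
  have zb: "(SOME y. y \<in> B \<inter> C) \<in> B \<inter> C" using someI_ex[of "\<lambda>x. x \<in> B \<inter> C"] assms(12) by auto
  have "orient_sets A C D = orient_pts x0 q p"
  proof -
    have "orient_pts x0 (SOME y. y \<in> A \<inter> D) (SOME y. y \<in> A \<inter> C) = orient_pts x0 q p"
      using orient_inv[of A C D x0 "SOME y. y \<in> A \<inter> D" "SOME y. y \<in> A \<inter> C" x0 q p]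
        assms(5,7,8) e1 x0 ya za p q by blast
    then show ?thesis unfolding orient_sets_def x0_def[symmetric] using e1 by simp
  qed
  moreover have "orient_sets B C D = orient_pts x0 q p"
  proof -
    have "orient_pts x0 (SOME y. y \<in> B \<inter> D) (SOME y. y \<in> B \<inter> C) = orient_pts x0 q p"
      using orient_inv[of B C D x0 "SOME y. y \<in> B \<inter> D" "SOME y. y \<in> B \<inter> C" x0 q p]
        assms(6,7,8) e2 x0 yb zb p q by blast
    then show ?thesis unfolding orient_sets_def x0_def[symmetric] using e2 by simp
  qed
  ultimately show ?thesis by simp
qed

end
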